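(* Let $(\mathcal{U},f,g,\preccurlyeq)$ be a fault-tolerance partially ordered $(m,n)$-semiring as described in the context, and let $x_1,\ldots,x_m,y_1,\ldots,y_n\in\mathcal{U}$ be disjoint components. Then (i) $x_i\preccurlyeq f(x_1,x_2,\ldots,x_m)$ for every $1\le i\le m$; (ii) $g(y_1,y_2,\ldots,y_n)\preccurlyeq y_j$ for every $1\le j\le n$.
   Context: Notation: $x_i^j$ denotes $x_i,\ldots,x_j$. $(\mathcal{U},f,g)$ is an $(m,n)$-semiring: $f$ is an associative $m$-ary and $g$ an associative $n$-ary operation on $\mathcal{U}$ (associativity of a $k$-ary $h$: $h(x_1^{i-1},h(x_i^{k+i-1}),x_{k+i}^{2k-1})=h(x_1^{j-1},h(x_j^{k+j-1}),x_{k+j}^{2k-1})$ for $1\le i\le j\le k$), and $g$ distributes over $f$ in every position. $\mathcal{U}$ is interpreted as a set of systems; $f(x_1^m)$ is the system that fails when any $x_i$ fails, $g(y_1^n)$ the system that fails only when all $y_j$ fail; elements are assumed to be disjoint components (failing independently), which imposes no further algebraic condition. $\mathbf{0}\in\mathcal{U}$ (the always-up system) is an $f$-identity ($f(\mathbf{0},\ldots,x,\ldots,\mathbf{0})=x$ in every position) and $\mathbf{1}$ (the always-down system) is a $g$-identity; moreover $g(y_1^{j-1},\mathbf{0},y_{j+1}^n)=\mathbf{0}$ and $f(x_1^{i-1},\mathbf{1},x_{i+1}^m)=\mathbf{1}$ for all arguments and positions. $\preccurlyeq$ is a partial order on $\mathcal{U}$ ("fault-tolerance partial order") such that $(\mathcal{U},f,g,\preccurlyeq)$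 is a partially ordered $(m,n)$-semiring: $a\preccurlyeq b$ implies $f(x_1^{i-1},a,x_{i+1}^m)\preccurlyeq f(x_1^{i-1},b,x_{i+1}^m)$ and $g(y_1^{j-1},a,y_{j+1}^n)\preccurlyeq g(y_1^{j-1},b,y_{j+1}^n)$ for all arguments and all positions; and $\mathbf{0}\preccurlyeq a\preccurlyeq\mathbf{1}$ for all $a\in\mathcal{U}$. *)

theory Defs
  imports Main
begin

text \<open>A k-ary operation on the carrier type 'a is modelled as a function on lists,
  meant to be applied to lists of length k. Positions are 0-based.\<close>

definition assoc_op :: "nat \<Rightarrow> ('a list \<Rightarrow> 'a) \<Rightarrow> bool" where
  "assoc_op k h \<longleftrightarrow>
     (\<forall>xs i j. length xs = 2 * k - 1 \<and> i \<le> j \<and> j < k \<longrightarrow>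
        h (take i xs @ [h (take k (drop i xs))] @ drop (i + k) xs) =
        h (take j xs @ [h (take k (drop j xs))] @ drop (j + k) xs))"

definition mn_semiring :: "nat \<Rightarrow> nat \<Rightarrow> ('a list \<Rightarrow> 'a) \<Rightarrow> ('a list \<Rightarrow> 'a) \<Rightarrow> bool" where
  "mn_semiring m n f g \<longleftrightarrow>
     2 \<le> m \<and> 2 \<le> n \<and> assoc_op m f \<and> assoc_op n g \<and>
     (\<forall>ys xs j. length ys = n \<and> length xs = m \<and> j < n \<longrightarrow>
        g (ys[j := f xs]) = f (map (\<lambda>x. g (ys[j := x])) xs))"

text \<open>Fault-tolerance partially ordered (m,n)-semiring with constants zero (always-up
  system) and one (always-down system).\<close>
definition ft_po_mn_semiring ::
  "nat \<Rightarrow> nat \<Rightarrow> ('a list \<Rightarrow> 'a) \<Rightarrow> ('a list \<Rightarrow> 'a) \<Rightarrow> ('a \<Rightarrow> 'a \<Rightarrow> bool) \<Rightarrow> 'a \<Rightarrow> 'a \<Rightarrow> bool" where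
  "ft_po_mn_semiring m n f g le zero one \<longleftrightarrow>
     mn_semiring m n f g \<and>
     \<comment> \<open>zero is an f-identity, one is a g-identity\<close>
     (\<forall>x i. i < m \<longrightarrow> f ((replicate m zero)[i := x]) = x) \<and>
     (\<forall>y j. j < n \<longrightarrow> g ((replicate n one)[j := y]) = y) \<and>
     \<comment> \<open>zero absorbs for g, one absorbs for f\<close>
     (\<forall>ys j. length ys = n \<and> j < n \<longrightarrow> g (ys[j := zero]) = zero) \<and>
     (\<forall>xs i. length xs = m \<and> i < m \<longrightarrow> f (xs[i := one]) = one) \<and>
     \<comment> \<open>le is a partial order\<close>
     (\<forall>a. le a a) \<and> (\<forall>a b. le a b \<and> le b a \<longrightarrow> a = b) \<and>
     (\<forall>a b c. le a b \<and> le b c \<longrightarrow> le a c) \<and>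
     \<comment> \<open>monotonicity of f and g in every position\<close>
     (\<forall>a b xs i. le a b \<and> length xs = m \<and> i < m \<longrightarrow> le (f (xs[i := a])) (f (xs[i := b]))) \<and>
     (\<forall>a b ys j. le a b \<and> length ys = n \<and> j < n \<longrightarrow> le (g (ys[j := a])) (g (ys[j := b]))) \<and>
     \<comment> \<open>bounds\<close>
     (\<forall>a. le zero a \<and> le a one)"

end

theory Submission
  imports Defs
begin

lemma chain_lemma:
  fixes F :: "'a list \<Rightarrow> 'a" and le :: "'a \<Rightarrow> 'a \<Rightarrow> bool"
  assumes trans: "\<forall>a b c. le a b \<and> le b c \<longrightarrow> le a c"
    and refl: "\<forall>a. le a a"
    and mono: "\<forall>a b xs i. le a b \<and> length xs = m \<and> i < m \<longrightarrow> le (F (xs[i := a])) (F (xs[i := b]))"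
    and bnd: "\<forall>a. le e a"
    and len: "length xs = m" and im: "i < m"
  shows "k \<le> m \<Longrightarrow> le (F ((replicate m e)[i := xs ! i]))
           (F (map (\<lambda>p. if p < k \<or> p = i then xs ! p else e) [0..<m]))"
proof (induction k)
  case 0
  have "map (\<lambda>p. if p < 0 \<or> p = i then xs ! p else e) [0..<m] = (replicate m e)[i := xs ! i]"
    by (rule nth_equalityI) (auto simp: nth_list_update im)
  then show ?case using refl by simp
next
  case (Suc k)
  define w where "w = map (\<lambda>p. if p < k \<or> p = i then xs ! p else e) [0..<m]"
  have k: "k < m" using Suc by simp
  have IH: "le (F ((replicate m e)[i := xs ! i])) (F w)" using Suc w_def by simp
  have step: "le (F w) (F (map (\<lambda>p. if p < Suc k \<or> p = i then xs ! p else e) [0..<m]))"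
  proof (cases "k = i")
    case True
    have "map (\<lambda>p. if p < Suc k \<or> p = i then xs ! p else e) [0..<m] = w"
      unfolding w_def by (rule nth_equalityI) (auto simp: True)
    then show ?thesis using refl by simp
  next
    case False
    have e1: "w = w[k := e]" unfolding w_def
      by (rule nth_equalityI) (auto simp: nth_list_update False)
    have e2: "map (\<lambda>p. if p < Suc k \<or> p = i then xs ! p else e) [0..<m] = w[k := xs ! k]"
      unfolding w_def by (rule nth_equalityI) (use k in \<open>auto simp: nth_list_update\<close>)
    have "le (F (w[k := e])) (F (w[k := xs ! k]))"
      using mono bnd k by (simp add: w_def)
    then show ?thesis using e1 e2 by metis
  qed
  show ?case using trans IH step by blast
qed

lemma full_map: "length xs = m \<Longrightarrow> map (\<lambda>p. if p < m \<or> p = i then xs ! p else e) [0..<m] = xs"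
  by (rule nth_equalityI) auto

theorem lemma3:
  fixes f g :: "'a list \<Rightarrow> 'a" and le :: "'a \<Rightarrow> 'a \<Rightarrow> bool" and zero one :: 'a
    and m n :: nat and xs ys :: "'a list"
  assumes "ft_po_mn_semiring m n f g le zero one"
    and "length xs = m" and "length ys = n"
  shows "(\<forall>i < m. le (xs ! i) (f xs)) \<and> (\<forall>j < n. le (g ys) (ys ! j))"
proof -
  from assms(1)[unfolded ft_po_mn_semiring_def]
  obtain id0: "\<forall>x i. i < m \<longrightarrow> f ((replicate m zero)[i := x]) = x"
    and id1: "\<forall>y j. j < n \<longrightarrow> g ((replicate n one)[j := y]) = y"
    and rfl: "\<forall>a. le a a"
    and trn: "\<forall>a b c. le a b \<and> le b c \<longrightarrow> le a c"
    and mf: "\<forall>a b xs i. le a b \<and> length xs = m \<and> i < m \<longrightarrow> le (f (xs[i := a])) (f (xs[i := b]))"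
    and mg: "\<forall>a b ys j. le a b \<and> length ys = n \<and> j < n \<longrightarrow> le (g (ys[j := a])) (g (ys[j := b]))"
    and bd: "\<forall>a. le zero a \<and> le a one"
    by (elim conjE) assumption
  have P1: "le (xs ! i) (f xs)" if im: "i < m" for i
  proof -
    have "le (f ((replicate m zero)[i := xs ! i]))
           (f (map (\<lambda>p. if p < m \<or> p = i then xs ! p else zero) [0..<m]))"
      by (rule chain_lemma[where le=le and m=m, OF trn rfl mf _ assms(2) im order.refl])
         (use bd in blast)
    then show ?thesis using id0 im full_map[OF assms(2)] by simp
  qed
  define le' where "le' = (\<lambda>a b. le b a)"
  have P2: "le (g ys) (ys ! j)" if jn: "j < n" for j
  proof -
    have t: "\<forall>a b c. le' a b \<and> le' b c \<longrightarrow> le' a c" using trn unfolding le'_def by blast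
    have r: "\<forall>a. le' a a" using rfl unfolding le'_def by blast
    have mo: "\<forall>a b xs i. le' a b \<and> length xs = n \<and> i < n \<longrightarrow> le' (g (xs[i := a])) (g (xs[i := b]))"
      using mg unfolding le'_def by blast
    have "le' (g ((replicate n one)[j := ys ! j]))
           (g (map (\<lambda>p. if p < n \<or> p = j then ys ! p else one) [0..<n]))"
      by (rule chain_lemma[where le=le' and m=n, OF t r mo _ assms(3) jn order.refl])
         (use bd in \<open>simp add: le'_def\<close>)
    then show ?thesis using id1 jn full_map[OF assms(3)] unfolding le'_def by simp
  qed
  show ?thesis using P1 P2 by blast
qed

end
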